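(* Let $G$ be a graph of order $n$, and let $H$ be a graph with $\Delta(H)\le n(H)-2$, where $n(H)=|V(H)|$. Then $$\gamma_{oidR}(G\odot H)=\min\{|V_0|(n(H)+\gamma(H))+|V_1|(\gamma_{oidR}(H)+1)+|V_2|(\gamma_{oiR}(H)+2)+|V_3|(\beta(H)+3)\},$$ where the minimum is taken over all functions $f_G:V(G)\to\{0,1,2,3\}$ for which $V_0=f_G^{-1}(0)$ is an independent set of $G$, and $V_i=f_G^{-1}(i)$.
   Context: The corona $G\odot H$ is obtained from $G$ with $V(G)=\{v_1,\dots,v_n\}$ and $n$ disjoint copies $H_1,\dots,H_n$ of $H$ by joining $v_i$ to every vertex of $H_i$ for each $i$. $\gamma(H)$ is the domination number and $\beta(H)$ the vertex cover number of $H$. A DRD function of a graph is $f:V\to\{0,1,2,3\}$ such that every vertex with value $0$ has a neighbor with value $3$ or two neighbors with value $2$, and every vertex with value $1$ has a neighbor with value at least $2$; it is an OIDRD function if the set of vertices with value $0$ is independent, and $\gamma_{oidR}$ is the minimum weight $\sum_v f(v)$ of an OIDRD function. A Roman dominating function is $f:V\to\{0,1,2\}$ such that every vertex with value $0$ has a neighbor with value $2$; it is an OIRD function if the set of vertices with value $0$ is independent, and $\gamma_{oiR}$ is the minimum weight of an OIRD function. *)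

theory Defs
  imports Main
begin

definition sgraph :: "'a set \<Rightarrow> 'a set set \<Rightarrow> bool" where
  "sgraph V E \<longleftrightarrow> finite V \<and> (\<forall>e\<in>E. \<exists>u v. u \<noteq> v \<and> u \<in> V \<and> v \<in> V \<and> e = {u, v})"

definition adj :: "'a set set \<Rightarrow> 'a \<Rightarrow> 'a \<Rightarrow> bool" where
  "adj E u v \<longleftrightarrow> u \<noteq> v \<and> {u, v} \<in> E"

definition degree :: "'a set \<Rightarrow> 'a set set \<Rightarrow> 'a \<Rightarrow> nat" where
  "degree V E v = card {u \<in> V. adj E v u}"

definition independent :: "'a set set \<Rightarrow> 'a set \<Rightarrow> bool" where
  "independent E S \<longleftrightarrow> (\<forall>u\<in>S. \<forall>v\<in>S. \<not> adj E u v)"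

definition dominating :: "'a set \<Rightarrow> 'a set set \<Rightarrow> 'a set \<Rightarrow> bool" where
  "dominating V E D \<longleftrightarrow> D \<subseteq> V \<and> (\<forall>v\<in>V - D. \<exists>u\<in>D. adj E u v)"

definition domination_number :: "'a set \<Rightarrow> 'a set set \<Rightarrow> nat" where
  "domination_number V E = Min (card ` {D. dominating V E D})"

definition vertex_cover :: "'a set \<Rightarrow> 'a set set \<Rightarrow> 'a set \<Rightarrow> bool" where
  "vertex_cover V E C \<longleftrightarrow> C \<subseteq> V \<and> (\<forall>e\<in>E. e \<inter> C \<noteq> {})"

definition vertex_cover_number :: "'a set \<Rightarrow> 'a set set \<Rightarrow> nat" where
  "vertex_cover_number V E = Min (card ` {C. vertex_cover V E C})"

definition weight :: "'a set \<Rightarrow> ('a \<Rightarrow> nat) \<Rightarrow> nat" where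
  "weight V f = (\<Sum>v\<in>V. f v)"

definition DRD :: "'a set \<Rightarrow> 'a set set \<Rightarrow> ('a \<Rightarrow> nat) \<Rightarrow> bool" where
  "DRD V E f \<longleftrightarrow> f ` V \<subseteq> {0, 1, 2, 3} \<and>
     (\<forall>v\<in>V. f v = 0 \<longrightarrow>
        (\<exists>u\<in>V. adj E v u \<and> f u = 3) \<or>
        (\<exists>u\<in>V. \<exists>w\<in>V. u \<noteq> w \<and> adj E v u \<and> adj E v w \<and> f u = 2 \<and> f w = 2)) \<and>
     (\<forall>v\<in>V. f v = 1 \<longrightarrow> (\<exists>u\<in>V. adj E v u \<and> f u \<ge> 2))"

definition OIDRD :: "'a set \<Rightarrow> 'a set set \<Rightarrow> ('a \<Rightarrow> nat) \<Rightarrow> bool" where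
  "OIDRD V E f \<longleftrightarrow> DRD V E f \<and> independent E {v \<in> V. f v = 0}"

definition gamma_oidR :: "'a set \<Rightarrow> 'a set set \<Rightarrow> nat" where
  "gamma_oidR V E = Min (weight V ` {f. OIDRD V E f})"

definition RD :: "'a set \<Rightarrow> 'a set set \<Rightarrow> ('a \<Rightarrow> nat) \<Rightarrow> bool" where
  "RD V E f \<longleftrightarrow> f ` V \<subseteq> {0, 1, 2} \<and>
     (\<forall>v\<in>V. f v = 0 \<longrightarrow> (\<exists>u\<in>V. adj E v u \<and> f u = 2))"

definition OIRD :: "'a set \<Rightarrow> 'a set set \<Rightarrow> ('a \<Rightarrow> nat) \<Rightarrow> bool" where
  "OIRD V E f \<longleftrightarrow> RD V E f \<and> independent E {v \<in> V. f v = 0}"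

definition gamma_oiR :: "'a set \<Rightarrow> 'a set set \<Rightarrow> nat" where
  "gamma_oiR V E = Min (weight V ` {f. OIRD V E f})"

text \<open>Corona G o H: vertices Inl v for v in V(G), and Inr (v, x) for the copy of x in H_v.\<close>

definition corona_V :: "'a set \<Rightarrow> 'b set \<Rightarrow> ('a + 'a \<times> 'b) set" where
  "corona_V VG VH = Inl ` VG \<union> Inr ` (VG \<times> VH)"

definition corona_E :: "'a set \<Rightarrow> 'a set set \<Rightarrow> 'b set \<Rightarrow> 'b set set \<Rightarrow> ('a + 'a \<times> 'b) set set" where
  "corona_E VG EG VH EH =
     (\<lambda>e. Inl ` e) ` EG
   \<union> {(\<lambda>x. Inr (v, x)) ` e | v e. v \<in> VG \<and> e \<in> EH}
   \<union> {{Inl v, Inr (v, x)} | v x. v \<in> VG \<and> x \<in> VH}"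

end

theory Submission
  imports Defs
begin

lemma adj_sym: "adj E u v = adj E v u"
  by (auto simp: adj_def insert_commute)

lemma corona_E_mem: "S \<in> corona_E VG EG VH EH \<longleftrightarrow>
   (\<exists>e\<in>EG. S = Inl ` e) \<or> (\<exists>u e. u \<in> VG \<and> e \<in> EH \<and> S = (\<lambda>z. Inr (u,z)) ` e)
   \<or> (\<exists>u z. u \<in> VG \<and> z \<in> VH \<and> S = {Inl u, Inr (u,z)})"
  unfolding corona_E_def by blast

lemma adj_Inl_Inl: "adj (corona_E VG EG VH EH) (Inl a) (Inl b) \<longleftrightarrow> adj EG a b"
proof -
  have "{Inl a, Inl b} = Inl ` {a, b}" by auto
  then have 1: "{Inl a, Inl b} = Inl ` e \<longleftrightarrow> e = {a,b}" for e :: "'a set"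
    by (metis inj_Inl inj_image_eq_iff)
  have 2: "\<not> (\<exists>u z. u \<in> VG \<and> z \<in> VH \<and> {Inl a, Inl b} = {Inl u, Inr (u,z)})"
    by (auto simp: doubleton_eq_iff)
  have 3: "\<not> (\<exists>u e. u \<in> VG \<and> e \<in> EH \<and> {Inl a, Inl b} = (\<lambda>z. Inr (u,z)) ` e)"
  proof
    assume "\<exists>u e. u \<in> VG \<and> e \<in> EH \<and> {Inl a, Inl b} = (\<lambda>z. Inr (u,z)) ` e"
    then obtain u e where "{Inl a, Inl b} = (\<lambda>z. Inr (u,z)) ` e" by blast
    then have "Inl a \<in> (\<lambda>z. Inr (u,z)) ` e" by (metis insertI1)
    then show False by auto
  qed
  have 4: "(\<exists>e\<in>EG. {Inl a, Inl b} = Inl ` e) \<longleftrightarrow> {a,b} \<in> EG"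
    by (simp add: 1)
  have "{Inl a, Inl b} \<in> corona_E VG EG VH EH \<longleftrightarrow> {a,b} \<in> EG"
    unfolding corona_E_mem using 2 3 4 by blast
  then show ?thesis unfolding adj_def by simp
qed

lemma adj_Inl_Inr: "adj (corona_E VG EG VH EH) (Inl a) (Inr (v,x)) \<longleftrightarrow> a = v \<and> v \<in> VG \<and> x \<in> VH"
proof -
  have 3: "\<not> (\<exists>u e. u \<in> VG \<and> e \<in> EH \<and> {Inl a, Inr (v,x)} = (\<lambda>z. Inr (u,z)) ` e)"
  proof
    assume "\<exists>u e. u \<in> VG \<and> e \<in> EH \<and> {Inl a, Inr (v,x)} = (\<lambda>z. Inr (u,z)) ` e"
    then obtain u e where "{Inl a, Inr (v,x)} = (\<lambda>z. Inr (u,z)) ` e" by blast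
    then have "Inl a \<in> (\<lambda>z. Inr (u,z)) ` e" by (metis insertI1)
    then show False by auto
  qed
  have 4: "\<not> (\<exists>e\<in>EG. {Inl a, Inr (v,x)} = Inl ` e)"
  proof
    assume "\<exists>e\<in>EG. {Inl a, Inr (v,x)} = Inl ` e"
    then obtain e where "{Inl a, Inr (v,x)} = Inl ` e" by blast
    then have "Inr (v,x) \<in> Inl ` e" by (metis insertI1 insertI2)
    then show False by auto
  qed
  have 5: "(\<exists>u z. u \<in> VG \<and> z \<in> VH \<and> {Inl a, Inr (v,x)} = {Inl u, Inr (u,z)}) \<longleftrightarrow> a = v \<and> v \<in> VG \<and> x \<in> VH"
    by (auto simp: doubleton_eq_iff)
  have "{Inl a, Inr (v,x)} \<in> corona_E VG EG VH EH \<longleftrightarrow> a = v \<and> v \<in> VG \<and> x \<in> VH"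
    unfolding corona_E_mem by (simp only: 3 4 5 simp_thms)
  then show ?thesis unfolding adj_def by simp
qed

lemma adj_Inr_Inr:
  fixes VG :: "'a set" and VH :: "'b set"
  shows "adj (corona_E VG EG VH EH) (Inr (v,x)) (Inr (w,y)) \<longleftrightarrow> v = w \<and> v \<in> VG \<and> adj EH x y"
proof
  assume a: "adj (corona_E VG EG VH EH) (Inr (v,x)) (Inr (w,y))"
  then have ne: "(v,x) \<noteq> (w,y)" by (auto simp: adj_def)
  have 4: "\<not> (\<exists>e\<in>EG. {Inr (v,x), Inr (w,y)} = Inl ` e)"
  proof
    assume "\<exists>e\<in>EG. {Inr (v,x), Inr (w,y)} = Inl ` e"
    then obtain e where "{Inr (v,x), Inr (w,y)} = Inl ` e" by blast
    then have "Inr (v,x) \<in> Inl ` e" by (metis insertI1)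
    then show False by auto
  qed
  have 5: "\<not> (\<exists>u z. u \<in> VG \<and> z \<in> VH \<and> {Inr (v,x), Inr (w,y)} = {Inl u, Inr (u,z)})"
    by (auto simp: doubleton_eq_iff)
  have "{Inr (v,x), Inr (w,y)} \<in> corona_E VG EG VH EH" using a by (simp add: adj_def)
  then have "\<exists>u e. u \<in> VG \<and> e \<in> EH \<and> {Inr (v,x), Inr (w,y)} = ((\<lambda>z. Inr (u,z)) ` e :: ('a + 'a \<times> 'b) set)"
    unfolding corona_E_mem by (simp only: 4 5 simp_thms)
  then obtain u e where ue: "u \<in> VG" "e \<in> EH" "{Inr (v,x), Inr (w,y)} = ((\<lambda>z. Inr (u,z)) ` e :: ('a + 'a \<times> 'b) set)"
    by (elim exE conjE)
  then have "(Inr (v,x) :: 'a + 'a \<times> 'b) \<in> (\<lambda>z. Inr (u,z)) ` e" "(Inr (w,y) :: 'a + 'a \<times> 'b) \<in> (\<lambda>z. Inr (u,z)) ` e"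
    by (metis insertI1, metis insertI1 insertI2)
  then have "v = u" "w = u" by auto
  moreover have "((\<lambda>z. Inr (u,z)) ` {x,y} :: ('a + 'a \<times> 'b) set) = (\<lambda>z. Inr (u,z)) ` e" using ue `v = u` `w = u` by auto
  then have "{x,y} = e" by (rule inj_image_eq_iff[THEN iffD1, rotated]) (auto simp: inj_def)
  ultimately show "v = w \<and> v \<in> VG \<and> adj EH x y" using ue ne by (auto simp: adj_def)
next
  assume "v = w \<and> v \<in> VG \<and> adj EH x y"
  then have "{Inr (v,x), Inr (w,y)} = ((\<lambda>z. Inr (v,z)) ` {x,y} :: ('a + 'a \<times> 'b) set)" "v \<in> VG" "{x,y} \<in> EH" "x \<noteq> y"
    by (auto simp: adj_def)
  then have "{Inr (v,x), Inr (w,y)} \<in> corona_E VG EG VH EH" unfolding corona_E_mem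
    by (intro disjI2 disjI1 exI conjI)
  then show "adj (corona_E VG EG VH EH) (Inr (v,x)) (Inr (w,y))"
    using `x \<noteq> y` by (simp add: adj_def)
qed

lemma weight_le3: "finite V \<Longrightarrow> f ` V \<subseteq> {0,1,2,3} \<Longrightarrow> weight V f \<le> 3 * card V"
proof -
  assume "finite V" "f ` V \<subseteq> {0,1,2,3}"
  then have "weight V f \<le> (\<Sum>v\<in>V. 3)" unfolding weight_def by (intro sum_mono) auto
  then show ?thesis by simp
qed

lemma fin_oidR: "finite V \<Longrightarrow> finite (weight V ` {f. OIDRD V E f})"
proof -
  assume a: "finite V"
  have "\<And>f. OIDRD V E f \<Longrightarrow> weight V f \<le> 3 * card V" using weight_le3[OF a] unfolding OIDRD_def DRD_def by blast
  note bnd = this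
  show ?thesis by (rule finite_subset[of _ "{..3 * card V}"]) (use bnd in auto)
qed

lemma ne_oidR: "OIDRD V E (\<lambda>_. 2)"
  by (auto simp: OIDRD_def DRD_def independent_def)

lemma fin_oiR: "finite V \<Longrightarrow> finite (weight V ` {f. OIRD V E f})"
proof -
  assume a: "finite V"
  have "\<And>f. OIRD V E f \<Longrightarrow> weight V f \<le> 3 * card V"
  proof -
    fix f assume "OIRD V E f"
    then have "f ` V \<subseteq> {0,1,2,3}" unfolding OIRD_def RD_def by auto
    then show "weight V f \<le> 3 * card V" using weight_le3[OF a] by blast
  qed
  note bnd = this
  show ?thesis by (rule finite_subset[of _ "{..3 * card V}"]) (use bnd in auto)
qed

lemma ne_oiR: "OIRD V E (\<lambda>_. 1)"
  by (auto simp: OIRD_def RD_def independent_def)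

lemma fin_dom: "finite V \<Longrightarrow> finite (card ` {D. dominating V E D})"
  by (rule finite_imageI, rule finite_subset[of _ "Pow V"]) (auto simp: dominating_def)

lemma ne_dom: "dominating V E V"
  by (auto simp: dominating_def)

lemma fin_vc: "finite V \<Longrightarrow> finite (card ` {C. vertex_cover V E C})"
  by (rule finite_imageI, rule finite_subset[of _ "Pow V"]) (auto simp: vertex_cover_def)

lemma ne_vc: "sgraph V E \<Longrightarrow> vertex_cover V E V"
  by (fastforce simp: vertex_cover_def sgraph_def)

lemma oidR_le: "finite V \<Longrightarrow> OIDRD V E f \<Longrightarrow> gamma_oidR V E \<le> weight V f"
  unfolding gamma_oidR_def by (rule Min_le) (auto simp: fin_oidR)

lemma oiR_le: "finite V \<Longrightarrow> OIRD V E f \<Longrightarrow> gamma_oiR V E \<le> weight V f"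
  unfolding gamma_oiR_def by (rule Min_le) (auto simp: fin_oiR)

lemma dom_le: "finite V \<Longrightarrow> dominating V E D \<Longrightarrow> domination_number V E \<le> card D"
  unfolding domination_number_def by (rule Min_le) (auto simp: fin_dom)

lemma vc_le: "finite V \<Longrightarrow> vertex_cover V E C \<Longrightarrow> vertex_cover_number V E \<le> card C"
  unfolding vertex_cover_number_def by (rule Min_le) (auto simp: fin_vc)

lemma oidR_ex: "finite V \<Longrightarrow> \<exists>f. OIDRD V E f \<and> weight V f = gamma_oidR V E"
proof -
  assume "finite V"
  then have "gamma_oidR V E \<in> weight V ` {f. OIDRD V E f}"
    unfolding gamma_oidR_def using ne_oidR by (intro Min_in fin_oidR) auto
  then show ?thesis by auto
qed

lemma oiR_ex: "finite V \<Longrightarrow> \<exists>f. OIRD V E f \<and> weight V f = gamma_oiR V E"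
proof -
  assume "finite V"
  then have "gamma_oiR V E \<in> weight V ` {f. OIRD V E f}"
    unfolding gamma_oiR_def using ne_oiR by (intro Min_in fin_oiR) auto
  then show ?thesis by auto
qed

lemma dom_ex: "finite V \<Longrightarrow> \<exists>D. dominating V E D \<and> card D = domination_number V E"
proof -
  assume "finite V"
  then have "domination_number V E \<in> card ` {D. dominating V E D}"
    unfolding domination_number_def using ne_dom by (intro Min_in fin_dom) auto
  then show ?thesis by auto
qed

lemma vc_ex: "sgraph V E \<Longrightarrow> \<exists>C. vertex_cover V E C \<and> card C = vertex_cover_number V E"
proof -
  assume a: "sgraph V E"
  then have "finite V" by (simp add: sgraph_def)
  then have "vertex_cover_number V E \<in> card ` {C. vertex_cover V E C}"
    unfolding vertex_cover_number_def using ne_vc[OF a] by (intro Min_in fin_vc) auto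
  then show ?thesis by auto
qed

lemma lb0:
  assumes "finite VH" "\<forall>x\<in>VH. g x \<noteq> 0"
    "\<forall>x\<in>VH. g x = 1 \<longrightarrow> (\<exists>y\<in>VH. adj EH x y \<and> g y \<ge> 2)"
  shows "card VH + domination_number VH EH \<le> (\<Sum>x\<in>VH. g x)"
proof -
  define S where "S = {x\<in>VH. g x \<ge> 2}"
  have "dominating VH EH S"
    unfolding dominating_def
  proof (intro conjI ballI)
    show "S \<subseteq> VH" by (auto simp: S_def)
    fix v assume v: "v \<in> VH - S"
    then have "g v = 1" using assms(2) by (auto simp: S_def)
    then obtain y where "y \<in> VH" "adj EH v y" "g y \<ge> 2" using assms(3) v by auto
    then show "\<exists>u\<in>S. adj EH u v" by (auto simp: S_def adj_sym)
  qed
  then have d: "domination_number VH EH \<le> card S" using dom_le assms(1) by blast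
  have "(\<Sum>x\<in>VH. g x) \<ge> (\<Sum>x\<in>VH. 1 + (if x \<in> S then 1 else 0))"
    using assms(2) by (intro sum_mono) (auto simp: S_def)
  also have "(\<Sum>x\<in>VH. 1 + (if x \<in> S then 1 else 0)) = card VH + (\<Sum>x\<in>VH. if x \<in> S then 1 else 0)"
    by (simp only: sum.distrib) simp
  also have "(\<Sum>x\<in>VH. if x \<in> S then 1 else 0) = (\<Sum>x\<in>{x\<in>VH. x \<in> S}. 1)"
    using assms(1) by (rule sum.inter_filter[symmetric])
  also have "{x\<in>VH. x \<in> S} = S" by (auto simp: S_def)
  finally show ?thesis using d by simp
qed

lemma lb2:
  assumes "finite VH" "g ` VH \<subseteq> {0,1,2,3}" "independent EH {x\<in>VH. g x = 0}"
    "\<forall>x\<in>VH. g x = 0 \<longrightarrow> (\<exists>y\<in>VH. adj EH x y \<and> g y \<ge> 2)"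
  shows "gamma_oiR VH EH \<le> (\<Sum>x\<in>VH. g x)"
proof -
  define g' where "g' = (\<lambda>x. min (g x) 2)"
  have z: "{x\<in>VH. g' x = 0} = {x\<in>VH. g x = 0}" by (auto simp: g'_def)
  have "OIRD VH EH g'"
    unfolding OIRD_def RD_def z
  proof (intro conjI ballI impI)
    show "g' ` VH \<subseteq> {0, 1, 2}" using assms(2) by (auto simp: g'_def min_def)
    show "independent EH {x \<in> VH. g x = 0}" by (rule assms(3))
    fix v assume "v \<in> VH" "g' v = 0"
    then have "g v = 0" by (auto simp: g'_def min_def split: if_splits)
    then obtain y where "y \<in> VH" "adj EH v y" "g y \<ge> 2" using assms(4) `v \<in> VH` by auto
    then show "\<exists>u\<in>VH. adj EH v u \<and> g' u = 2" by (auto simp: g'_def)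
  qed
  then have "gamma_oiR VH EH \<le> weight VH g'" using oiR_le assms(1) by blast
  also have "weight VH g' \<le> (\<Sum>x\<in>VH. g x)" unfolding weight_def g'_def by (intro sum_mono) auto
  finally show ?thesis .
qed

lemma lb3:
  assumes "sgraph VH EH" "independent EH {x\<in>VH. g x = 0}"
  shows "vertex_cover_number VH EH \<le> (\<Sum>x\<in>VH. g x)"
proof -
  have fin: "finite VH" using assms(1) by (simp add: sgraph_def)
  define C where "C = {x\<in>VH. g x \<noteq> 0}"
  have "vertex_cover VH EH C"
    unfolding vertex_cover_def
  proof (intro conjI ballI)
    show "C \<subseteq> VH" by (auto simp: C_def)
    fix e assume "e \<in> EH"
    then obtain u w where uw: "u \<noteq> w" "u \<in> VH" "w \<in> VH" "e = {u,w}" using assms(1) by (auto simp: sgraph_def)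
    then have "adj EH u w" using `e \<in> EH` by (simp add: adj_def)
    then show "e \<inter> C \<noteq> {}" using assms(2) uw by (auto simp: independent_def C_def)
  qed
  then have "vertex_cover_number VH EH \<le> card C" using vc_le fin by blast
  also have "card C = (\<Sum>x\<in>C. 1)" by simp
  also have "\<dots> \<le> (\<Sum>x\<in>C. g x)" by (intro sum_mono) (auto simp: C_def)
  also have "\<dots> \<le> (\<Sum>x\<in>VH. g x)" using fin by (intro sum_mono2) (auto simp: C_def)
  finally show ?thesis .
qed

lemma sum_ind: "finite V \<Longrightarrow> S \<subseteq> V \<Longrightarrow> (\<Sum>x\<in>V. if x \<in> S then (1::nat) else 0) = card S"
proof -
  assume a: "finite V" "S \<subseteq> V"
  have "(\<Sum>x\<in>V. if x \<in> S then (1::nat) else 0) = (\<Sum>x\<in>{x\<in>V. x \<in> S}. 1)"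
    using a(1) by (rule sum.inter_filter[symmetric])
  also have "{x\<in>V. x \<in> S} = S" using a(2) by auto
  finally show ?thesis by simp
qed

lemma ub0:
  assumes "sgraph VH EH" "VH \<noteq> {}" "\<forall>x\<in>VH. degree VH EH x + 2 \<le> card VH"
  shows "\<exists>g. (\<forall>x\<in>VH. g x = 1 \<or> g x = 2) \<and> (\<forall>x\<in>VH. g x = 1 \<longrightarrow> (\<exists>y\<in>VH. adj EH x y \<and> g y = 2))
     \<and> (\<exists>a\<in>VH. \<exists>b\<in>VH. a \<noteq> b \<and> g a = 2 \<and> g b = 2)
     \<and> (\<Sum>x\<in>VH. g x) = card VH + domination_number VH EH"
proof -
  have fin: "finite VH" using assms(1) by (simp add: sgraph_def)
  obtain D where D: "dominating VH EH D" "card D = domination_number VH EH" using dom_ex[OF fin] by blast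
  have DV: "D \<subseteq> VH" using D(1) by (simp add: dominating_def)
  have "D \<noteq> {}"
  proof
    assume "D = {}"
    then show False using D(1) assms(2) by (auto simp: dominating_def)
  qed
  then obtain a where a: "a \<in> D" by blast
  have aV: "a \<in> VH" using a DV by blast
  have "D - {a} \<noteq> {}"
  proof
    assume "D - {a} = {}"
    then have Da: "D = {a}" using a by blast
    have "VH - {a} \<subseteq> {u\<in>VH. adj EH a u}" using D(1) Da by (auto simp: dominating_def)
    then have "card (VH - {a}) \<le> degree VH EH a" unfolding degree_def by (intro card_mono) (auto simp: fin)
    moreover have "card (VH - {a}) = card VH - 1" using aV fin by (simp add: card_Diff_singleton)
    moreover have "degree VH EH a + 2 \<le> card VH" using assms(3) aV by blast
    ultimately show False by arith
  qed
  then obtain b where b: "b \<in> D" "b \<noteq> a" by blast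
  define g where "g = (\<lambda>x. if x \<in> D then 2 else (1::nat))"
  show ?thesis
  proof (intro exI conjI)
    show "\<forall>x\<in>VH. g x = 1 \<or> g x = 2" by (simp add: g_def)
    show "\<forall>x\<in>VH. g x = 1 \<longrightarrow> (\<exists>y\<in>VH. adj EH x y \<and> g y = 2)"
    proof (intro ballI impI)
      fix x assume "x \<in> VH" "g x = 1"
      then have "x \<in> VH - D" by (auto simp: g_def split: if_splits)
      then obtain u where "u \<in> D" "adj EH u x" using D(1) by (auto simp: dominating_def)
      then show "\<exists>y\<in>VH. adj EH x y \<and> g y = 2" using DV by (auto simp: g_def adj_sym)
    qed
    show "\<exists>a\<in>VH. \<exists>b\<in>VH. a \<noteq> b \<and> g a = 2 \<and> g b = 2" using a b DV by (auto simp: g_def)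
    have "(\<Sum>x\<in>VH. g x) = (\<Sum>x\<in>VH. 1 + (if x \<in> D then 1 else 0))"
      by (intro sum.cong) (auto simp: g_def)
    also have "\<dots> = card VH + (\<Sum>x\<in>VH. if x \<in> D then 1 else 0)"
      by (simp only: sum.distrib) simp
    also have "(\<Sum>x\<in>VH. if x \<in> D then 1 else 0) = card D" using sum_ind[OF fin DV] .
    finally show "(\<Sum>x\<in>VH. g x) = card VH + domination_number VH EH" using D(2) by simp
  qed
qed

lemma ub1:
  assumes "finite VH" "VH \<noteq> {}"
  shows "\<exists>g. OIDRD VH EH g \<and> (\<Sum>x\<in>VH. g x) = gamma_oidR VH EH \<and> (\<exists>y\<in>VH. g y \<ge> 2)"
proof -
  obtain g where g: "OIDRD VH EH g" "weight VH g = gamma_oidR VH EH" using oidR_ex[OF assms(1)] by blast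
  obtain x where x: "x \<in> VH" using assms(2) by blast
  have "\<exists>y\<in>VH. g y \<ge> 2"
  proof -
    have "g x \<ge> 2 \<or> g x = 0 \<or> g x = 1" by arith
    then show ?thesis
    proof (elim disjE)
      assume "g x \<ge> 2" then show ?thesis using x by blast
    next
      assume "g x = 0"
      then have "(\<exists>u\<in>VH. adj EH x u \<and> g u = 3) \<or>
        (\<exists>u\<in>VH. \<exists>w\<in>VH. u \<noteq> w \<and> adj EH x u \<and> adj EH x w \<and> g u = 2 \<and> g w = 2)"
        using g(1) x unfolding OIDRD_def DRD_def by blast
      then show ?thesis by force
    next
      assume "g x = 1"
      then show ?thesis using g(1) x unfolding OIDRD_def DRD_def by blast
    qed
  qed
  then show ?thesis using g by (auto simp: weight_def)
qed

lemma ub2: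
  assumes "finite VH"
  shows "\<exists>g. OIRD VH EH g \<and> (\<Sum>x\<in>VH. g x) = gamma_oiR VH EH"
  using oiR_ex[OF assms] by (auto simp: weight_def)

lemma ub3:
  assumes "sgraph VH EH"
  shows "\<exists>g. (\<forall>x\<in>VH. g x = 0 \<or> g x = 1) \<and> independent EH {x\<in>VH. g x = 0}
     \<and> (\<Sum>x\<in>VH. g x) = vertex_cover_number VH EH"
proof -
  have fin: "finite VH" using assms(1) by (simp add: sgraph_def)
  obtain C where C: "vertex_cover VH EH C" "card C = vertex_cover_number VH EH" using vc_ex[OF assms] by blast
  have CV: "C \<subseteq> VH" using C(1) by (simp add: vertex_cover_def)
  define g where "g = (\<lambda>x. if x \<in> C then (1::nat) else 0)"
  show ?thesis
  proof (intro exI conjI)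
    show "\<forall>x\<in>VH. g x = 0 \<or> g x = 1" by (simp add: g_def)
    show "independent EH {x\<in>VH. g x = 0}"
      unfolding independent_def
    proof (intro ballI notI)
      fix u w assume u: "u \<in> {x\<in>VH. g x = 0}" and w: "w \<in> {x\<in>VH. g x = 0}" and "adj EH u w"
      then have "{u,w} \<in> EH" by (simp add: adj_def)
      then have "{u,w} \<inter> C \<noteq> {}" using C(1) unfolding vertex_cover_def by blast
      then show False using u w by (auto simp: g_def split: if_splits)
    qed
    show "(\<Sum>x\<in>VH. g x) = vertex_cover_number VH EH"
      unfolding g_def using sum_ind[OF fin CV] C(2) by simp
  qed
qed

lemma weight_corona:
  assumes "finite VG" "finite VH"
  shows "weight (corona_V VG VH) F = (\<Sum>v\<in>VG. F (Inl v) + (\<Sum>x\<in>VH. F (Inr (v,x))))"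
proof -
  have "weight (corona_V VG VH) F = sum F (Inl ` VG) + sum F (Inr ` (VG \<times> VH))"
    unfolding weight_def corona_V_def using assms by (intro sum.union_disjoint) auto
  also have "sum F (Inl ` VG) = (\<Sum>v\<in>VG. F (Inl v))" by (simp add: sum.reindex)
  also have "sum F (Inr ` (VG \<times> VH)) = (\<Sum>p\<in>VG \<times> VH. F (Inr p))" by (simp add: sum.reindex)
  also have "\<dots> = (\<Sum>v\<in>VG. \<Sum>x\<in>VH. F (Inr (v,x)))"
    by (simp add: sum.cartesian_product)
  finally show ?thesis by (simp add: sum.distrib)
qed

definition lc :: "'b set \<Rightarrow> 'b set set \<Rightarrow> nat \<Rightarrow> nat" where
  "lc VH EH k = (if k = 0 then card VH + domination_number VH EH
     else if k = 1 then gamma_oidR VH EH + 1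
     else if k = 2 then gamma_oiR VH EH + 2 else vertex_cover_number VH EH + 3)"

lemma sum_if_const: "finite A \<Longrightarrow> (\<Sum>x\<in>A. if P x then (c::nat) else 0) = card {x\<in>A. P x} * c"
  by (simp add: sum.inter_filter[symmetric])

lemma cost_sum:
  assumes "finite VG" "f ` VG \<subseteq> {0,1,2,3}"
  shows "(\<Sum>v\<in>VG. lc VH EH (f v)) =
    card {v \<in> VG. f v = 0} * (card VH + domination_number VH EH)
         + card {v \<in> VG. f v = 1} * (gamma_oidR VH EH + 1)
         + card {v \<in> VG. f v = 2} * (gamma_oiR VH EH + 2)
         + card {v \<in> VG. f v = 3} * (vertex_cover_number VH EH + 3)"
proof -
  have "(\<Sum>v\<in>VG. lc VH EH (f v)) = (\<Sum>v\<in>VG. (if f v = 0 then card VH + domination_number VH EH else 0)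
     + (if f v = 1 then gamma_oidR VH EH + 1 else 0) + (if f v = 2 then gamma_oiR VH EH + 2 else 0)
     + (if f v = 3 then vertex_cover_number VH EH + 3 else 0))"
  proof (intro sum.cong refl)
    fix v assume "v \<in> VG"
    then have "f v = 0 \<or> f v = 1 \<or> f v = 2 \<or> f v = 3" using assms(2) by auto
    then show "lc VH EH (f v) = (if f v = 0 then card VH + domination_number VH EH else 0)
     + (if f v = 1 then gamma_oidR VH EH + 1 else 0) + (if f v = 2 then gamma_oiR VH EH + 2 else 0)
     + (if f v = 3 then vertex_cover_number VH EH + 3 else 0)"
      by (auto simp: lc_def)
  qed
  also have "\<dots> = card {v \<in> VG. f v = 0} * (card VH + domination_number VH EH)
         + card {v \<in> VG. f v = 1} * (gamma_oidR VH EH + 1)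
         + card {v \<in> VG. f v = 2} * (gamma_oiR VH EH + 2)
         + card {v \<in> VG. f v = 3} * (vertex_cover_number VH EH + 3)"
    by (simp only: sum.distrib sum_if_const[OF assms(1)])
  finally show ?thesis .
qed

lemma corona_V_cases:
  assumes "u \<in> corona_V VG VH"
  obtains (L) v where "v \<in> VG" "u = Inl v" | (R) v x where "v \<in> VG" "x \<in> VH" "u = Inr (v,x)"
  using assms unfolding corona_V_def by auto

lemma Inl_in: "v \<in> VG \<Longrightarrow> Inl v \<in> corona_V VG VH" by (simp add: corona_V_def)
lemma Inr_in: "v \<in> VG \<Longrightarrow> x \<in> VH \<Longrightarrow> Inr (v,x) \<in> corona_V VG VH" by (simp add: corona_V_def)

lemma adj_Inr_Inl: "adj (corona_E VG EG VH EH) (Inr (v,x)) (Inl a) \<longleftrightarrow> a = v \<and> v \<in> VG \<and> x \<in> VH"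
  using adj_Inl_Inr[of VG EG VH EH a v x] adj_sym by metis

lemma nbr:
  assumes "x \<in> VH" "w \<in> corona_V VG VH" "adj (corona_E VG EG VH EH) (Inr (v,x)) w"
  shows "w = Inl v \<or> (\<exists>y\<in>VH. w = Inr (v,y) \<and> adj EH x y)"
  using assms(2)
proof (cases rule: corona_V_cases)
  case (L a)
  then show ?thesis using assms(3) by (simp add: adj_Inr_Inl)
next
  case (R b y)
  then show ?thesis using assms(3) by (auto simp: adj_Inr_Inr)
qed

lemma local_lb:
  assumes H: "sgraph VH EH"
    and F: "OIDRD (corona_V VG VH) (corona_E VG EG VH EH) F" and v: "v \<in> VG"
  shows "lc VH EH (F (Inl v)) \<le> F (Inl v) + (\<Sum>x\<in>VH. F (Inr (v,x)))"
proof -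
  let ?CV = "corona_V VG VH" and ?CE = "corona_E VG EG VH EH"
  define g where "g = (\<lambda>x. F (Inr (v,x)))"
  have fin: "finite VH" using H by (simp add: sgraph_def)
  have vals: "\<And>u. u \<in> ?CV \<Longrightarrow> F u \<in> {0,1,2,3}" using F unfolding OIDRD_def DRD_def by blast
  have zero: "\<And>u. u \<in> ?CV \<Longrightarrow> F u = 0 \<Longrightarrow> (\<exists>w\<in>?CV. adj ?CE u w \<and> F w = 3) \<or>
        (\<exists>w1\<in>?CV. \<exists>w2\<in>?CV. w1 \<noteq> w2 \<and> adj ?CE u w1 \<and> adj ?CE u w2 \<and> F w1 = 2 \<and> F w2 = 2)"
    using F unfolding OIDRD_def DRD_def by blast
  have one: "\<And>u. u \<in> ?CV \<Longrightarrow> F u = 1 \<Longrightarrow> (\<exists>w\<in>?CV. adj ?CE u w \<and> F w \<ge> 2)"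
    using F unfolding OIDRD_def DRD_def by blast
  have ind: "\<And>u w. u \<in> ?CV \<Longrightarrow> w \<in> ?CV \<Longrightarrow> F u = 0 \<Longrightarrow> F w = 0 \<Longrightarrow> \<not> adj ?CE u w"
    using F unfolding OIDRD_def independent_def by blast
  have gvals: "g ` VH \<subseteq> {0,1,2,3}"
  proof (rule image_subsetI)
    fix x assume "x \<in> VH" then show "g x \<in> {0,1,2,3}" unfolding g_def by (rule vals[OF Inr_in[OF v]])
  qed
  have indH: "independent EH {x\<in>VH. g x = 0}"
    unfolding independent_def
  proof (intro ballI notI)
    fix x y assume x: "x \<in> {x\<in>VH. g x = 0}" and y: "y \<in> {x\<in>VH. g x = 0}" and a: "adj EH x y"
    from x y have xy: "x \<in> VH" "y \<in> VH" "F (Inr (v,x)) = 0" "F (Inr (v,y)) = 0" by (auto simp: g_def)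
    have "adj ?CE (Inr (v,x)) (Inr (v,y))" using v a by (simp add: adj_Inr_Inr)
    then show False using ind[OF Inr_in[OF v xy(1)] Inr_in[OF v xy(2)] xy(3,4)] by blast
  qed
  have c: "\<And>x. F (Inl v) = 0 \<Longrightarrow> x \<in> VH \<Longrightarrow> g x \<noteq> 0"
  proof
    fix x assume "F (Inl v) = 0" "x \<in> VH" "g x = 0"
    moreover have "adj ?CE (Inl v) (Inr (v,x))" using v `x \<in> VH` by (simp add: adj_Inl_Inr)
    ultimately show False using ind[OF Inl_in[OF v] Inr_in[OF v `x \<in> VH`]] by (auto simp: g_def)
  qed
  have d: "\<And>x. x \<in> VH \<Longrightarrow> g x = 1 \<Longrightarrow> F (Inl v) < 2 \<Longrightarrow> \<exists>y\<in>VH. adj EH x y \<and> g y \<ge> 2"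
  proof -
    fix x assume x: "x \<in> VH" "g x = 1" "F (Inl v) < 2"
    then obtain w where w: "w \<in> ?CV" "adj ?CE (Inr (v,x)) w" "F w \<ge> 2"
      using one[OF Inr_in[OF v x(1)]] by (auto simp: g_def)
    from nbr[OF x(1) w(1,2)] show "\<exists>y\<in>VH. adj EH x y \<and> g y \<ge> 2"
      using w(3) x(3) by (auto simp: g_def)
  qed
  have f: "\<And>x. x \<in> VH \<Longrightarrow> g x = 0 \<Longrightarrow> F (Inl v) \<le> 2 \<Longrightarrow> \<exists>y\<in>VH. adj EH x y \<and> g y \<ge> 2"
  proof -
    fix x assume x: "x \<in> VH" "g x = 0" "F (Inl v) \<le> 2"
    then have "(\<exists>w\<in>?CV. adj ?CE (Inr (v,x)) w \<and> F w = 3) \<or>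
        (\<exists>w1\<in>?CV. \<exists>w2\<in>?CV. w1 \<noteq> w2 \<and> adj ?CE (Inr (v,x)) w1 \<and> adj ?CE (Inr (v,x)) w2 \<and> F w1 = 2 \<and> F w2 = 2)"
      using zero[OF Inr_in[OF v x(1)]] by (auto simp: g_def)
    then show "\<exists>y\<in>VH. adj EH x y \<and> g y \<ge> 2"
    proof (elim disjE bexE conjE)
      fix w assume w: "w \<in> ?CV" "adj ?CE (Inr (v,x)) w" "F w = 3"
      from nbr[OF x(1) w(1,2)] show ?thesis using w(3) x(3) by (auto simp: g_def)
    next
      fix w1 w2 assume w: "w1 \<in> ?CV" "w2 \<in> ?CV" "w1 \<noteq> w2" "adj ?CE (Inr (v,x)) w1"
        "adj ?CE (Inr (v,x)) w2" "F w1 = 2" "F w2 = 2"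
      from nbr[OF x(1) w(1,4)] nbr[OF x(1) w(2,5)] show ?thesis using w(3,6,7) by (auto simp: g_def)
    qed
  qed
  have e: "\<And>x. x \<in> VH \<Longrightarrow> g x = 0 \<Longrightarrow> F (Inl v) = 1 \<Longrightarrow> (\<exists>y\<in>VH. adj EH x y \<and> g y = 3) \<or>
     (\<exists>y\<in>VH. \<exists>z\<in>VH. y \<noteq> z \<and> adj EH x y \<and> adj EH x z \<and> g y = 2 \<and> g z = 2)"
  proof -
    fix x assume x: "x \<in> VH" "g x = 0" "F (Inl v) = 1"
    then have "(\<exists>w\<in>?CV. adj ?CE (Inr (v,x)) w \<and> F w = 3) \<or>
        (\<exists>w1\<in>?CV. \<exists>w2\<in>?CV. w1 \<noteq> w2 \<and> adj ?CE (Inr (v,x)) w1 \<and> adj ?CE (Inr (v,x)) w2 \<and> F w1 = 2 \<and> F w2 = 2)"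
      using zero[OF Inr_in[OF v x(1)]] by (auto simp: g_def)
    then show "(\<exists>y\<in>VH. adj EH x y \<and> g y = 3) \<or>
     (\<exists>y\<in>VH. \<exists>z\<in>VH. y \<noteq> z \<and> adj EH x y \<and> adj EH x z \<and> g y = 2 \<and> g z = 2)"
    proof (elim disjE bexE conjE)
      fix w assume w: "w \<in> ?CV" "adj ?CE (Inr (v,x)) w" "F w = 3"
      from nbr[OF x(1) w(1,2)] show ?thesis using w(3) x(3) by (auto simp: g_def)
    next
      fix w1 w2 assume w: "w1 \<in> ?CV" "w2 \<in> ?CV" "w1 \<noteq> w2" "adj ?CE (Inr (v,x)) w1"
        "adj ?CE (Inr (v,x)) w2" "F w1 = 2" "F w2 = 2"
      have "w1 \<noteq> Inl v" "w2 \<noteq> Inl v" using w(6,7) x(3) by auto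
      then obtain y z where "y \<in> VH" "w1 = Inr (v,y)" "adj EH x y" "z \<in> VH" "w2 = Inr (v,z)" "adj EH x z"
        using nbr[OF x(1) w(1,4)] nbr[OF x(1) w(2,5)] by blast
      then show ?thesis using w(3,6,7) by (auto simp: g_def)
    qed
  qed
  have "F (Inl v) \<in> {0,1,2,3}" using vals Inl_in[OF v] by blast
  then consider "F (Inl v) = 0" | "F (Inl v) = 1" | "F (Inl v) = 2" | "F (Inl v) = 3" by auto
  then show ?thesis
  proof cases
    case 1
    have "card VH + domination_number VH EH \<le> (\<Sum>x\<in>VH. g x)"
      using lb0[OF fin, of g EH] c d 1 by auto
    then show ?thesis using 1 by (simp add: lc_def g_def)
  next
    case 2
    have "OIDRD VH EH g"
      unfolding OIDRD_def DRD_def using gvals indH e d 2 by auto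
    then have "gamma_oidR VH EH \<le> (\<Sum>x\<in>VH. g x)" using oidR_le[OF fin] by (simp add: weight_def)
    then show ?thesis using 2 by (simp add: lc_def g_def)
  next
    case 3
    have "gamma_oiR VH EH \<le> (\<Sum>x\<in>VH. g x)"
      using lb2[OF fin gvals indH] f 3 by auto
    then show ?thesis using 3 by (simp add: lc_def g_def)
  next
    case 4
    have "vertex_cover_number VH EH \<le> (\<Sum>x\<in>VH. g x)"
      using lb3[OF H indH] by auto
    then show ?thesis using 4 by (simp add: lc_def g_def)
  qed
qed

lemma construct:
  fixes VG :: "'a set" and VH :: "'b set"
  assumes G: "sgraph VG EG" and H: "sgraph VH EH" and ne: "VH \<noteq> {}"
    and deg: "\<forall>x\<in>VH. degree VH EH x + 2 \<le> card VH"
    and adm1: "fG ` VG \<subseteq> {0,1,2,3}" and adm2: "independent EG {v\<in>VG. fG v = 0}"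
  shows "\<exists>F. OIDRD (corona_V VG VH) (corona_E VG EG VH EH) F \<and>
     weight (corona_V VG VH) F = (\<Sum>v\<in>VG. lc VH EH (fG v))"
proof -
  let ?CV = "corona_V VG VH" and ?CE = "corona_E VG EG VH EH"
  have finH: "finite VH" using H by (simp add: sgraph_def)
  have finG: "finite VG" using G by (simp add: sgraph_def)
  obtain g0 where g0: "\<forall>x\<in>VH. g0 x = 1 \<or> g0 x = 2" "\<forall>x\<in>VH. g0 x = 1 \<longrightarrow> (\<exists>y\<in>VH. adj EH x y \<and> g0 y = 2)"
     "\<exists>a\<in>VH. \<exists>b\<in>VH. a \<noteq> b \<and> g0 a = 2 \<and> g0 b = 2"
     "(\<Sum>x\<in>VH. g0 x) = card VH + domination_number VH EH"
    using ub0[OF H ne deg] by blast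
  obtain g1 where g1: "OIDRD VH EH g1" "(\<Sum>x\<in>VH. g1 x) = gamma_oidR VH EH" "\<exists>y\<in>VH. g1 y \<ge> 2"
    using ub1[OF finH ne] by blast
  obtain g2 where g2: "OIRD VH EH g2" "(\<Sum>x\<in>VH. g2 x) = gamma_oiR VH EH"
    using ub2[OF finH] by blast
  obtain g3 where g3: "\<forall>x\<in>VH. g3 x = 0 \<or> g3 x = 1" "independent EH {x\<in>VH. g3 x = 0}"
     "(\<Sum>x\<in>VH. g3 x) = vertex_cover_number VH EH"
    using ub3[OF H] by blast
  have g1v: "\<And>x. x \<in> VH \<Longrightarrow> g1 x \<in> {0,1,2,3}" using g1(1) unfolding OIDRD_def DRD_def by blast
  have g1z: "\<And>x. x \<in> VH \<Longrightarrow> g1 x = 0 \<Longrightarrow> (\<exists>u\<in>VH. adj EH x u \<and> g1 u = 3) \<or>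
        (\<exists>u\<in>VH. \<exists>w\<in>VH. u \<noteq> w \<and> adj EH x u \<and> adj EH x w \<and> g1 u = 2 \<and> g1 w = 2)"
    using g1(1) unfolding OIDRD_def DRD_def by blast
  have g1o: "\<And>x. x \<in> VH \<Longrightarrow> g1 x = 1 \<Longrightarrow> (\<exists>u\<in>VH. adj EH x u \<and> g1 u \<ge> 2)"
    using g1(1) unfolding OIDRD_def DRD_def by blast
  have g1i: "\<And>x y. x \<in> VH \<Longrightarrow> y \<in> VH \<Longrightarrow> g1 x = 0 \<Longrightarrow> g1 y = 0 \<Longrightarrow> \<not> adj EH x y"
    using g1(1) unfolding OIDRD_def independent_def by blast
  have g2v: "\<And>x. x \<in> VH \<Longrightarrow> g2 x \<in> {0,1,2}" using g2(1) unfolding OIRD_def RD_def by blast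
  have g2z: "\<And>x. x \<in> VH \<Longrightarrow> g2 x = 0 \<Longrightarrow> (\<exists>u\<in>VH. adj EH x u \<and> g2 u = 2)"
    using g2(1) unfolding OIRD_def RD_def by blast
  have g2i: "\<And>x y. x \<in> VH \<Longrightarrow> y \<in> VH \<Longrightarrow> g2 x = 0 \<Longrightarrow> g2 y = 0 \<Longrightarrow> \<not> adj EH x y"
    using g2(1) unfolding OIRD_def independent_def by blast
  have g3i: "\<And>x y. x \<in> VH \<Longrightarrow> y \<in> VH \<Longrightarrow> g3 x = 0 \<Longrightarrow> g3 y = 0 \<Longrightarrow> \<not> adj EH x y"
    using g3(2) unfolding independent_def by blast
  have fv: "\<And>v. v \<in> VG \<Longrightarrow> fG v = 0 \<or> fG v = 1 \<or> fG v = 2 \<or> fG v = 3" using adm1 by auto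
  define gg where "gg k = (if k = 0 then g0 else if k = 1 then g1 else if k = (2::nat) then g2 else g3)" for k
  define F where "F u = (case u of Inl v \<Rightarrow> fG v | Inr p \<Rightarrow> gg (fG (fst p)) (snd p))" for u
  have FL: "\<And>v. F (Inl v) = fG v" by (simp add: F_def)
  have FR: "\<And>v x. F (Inr (v,x)) = gg (fG v) x" by (simp add: F_def)
  have gg0: "gg 0 = g0" and gg1: "gg 1 = g1" "gg (Suc 0) = g1" and gg2: "gg 2 = g2" and gg3: "gg 3 = g3"
    by (simp_all add: gg_def)
  have wt: "weight ?CV F = (\<Sum>v\<in>VG. lc VH EH (fG v))"
    unfolding weight_corona[OF finG finH]
  proof (intro sum.cong refl)
    fix v assume v: "v \<in> VG"
    show "F (Inl v) + (\<Sum>x\<in>VH. F (Inr (v, x))) = lc VH EH (fG v)"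
      using fv[OF v] g0(4) g1(2) g2(2) g3(3)
      by (auto simp: FL FR gg_def lc_def)
  qed
  have vals: "F ` ?CV \<subseteq> {0,1,2,3}"
  proof
    fix a assume "a \<in> F ` ?CV"
    then obtain u where u: "u \<in> ?CV" "a = F u" by blast
    from u(1) show "a \<in> {0,1,2,3}"
    proof (cases rule: corona_V_cases)
      case (L v) then show ?thesis using u adm1 by (auto simp: FL)
    next
      case (R v x)
      then show ?thesis using u fv[OF R(1)] g0(1) g1v[OF R(2)] g2v[OF R(2)] g3(1)
        by (auto simp: FR gg0 gg1 gg2 gg3)
    qed
  qed
  have zero: "\<forall>u\<in>?CV. F u = 0 \<longrightarrow> (\<exists>w\<in>?CV. adj ?CE u w \<and> F w = 3) \<or>
        (\<exists>w1\<in>?CV. \<exists>w2\<in>?CV. w1 \<noteq> w2 \<and> adj ?CE u w1 \<and> adj ?CE u w2 \<and> F w1 = 2 \<and> F w2 = 2)"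
  proof (intro ballI impI)
    fix u assume u: "u \<in> ?CV" "F u = 0"
    from u(1) show "(\<exists>w\<in>?CV. adj ?CE u w \<and> F w = 3) \<or>
        (\<exists>w1\<in>?CV. \<exists>w2\<in>?CV. w1 \<noteq> w2 \<and> adj ?CE u w1 \<and> adj ?CE u w2 \<and> F w1 = 2 \<and> F w2 = 2)"
    proof (cases rule: corona_V_cases)
      case (L v)
      then have "fG v = 0" using u by (simp add: FL)
      obtain a b where ab: "a \<in> VH" "b \<in> VH" "a \<noteq> b" "g0 a = 2" "g0 b = 2" using g0(3) by blast
      have "Inr (v,a) \<in> ?CV" "Inr (v,b) \<in> ?CV" "Inr (v,a) \<noteq> (Inr (v,b) :: 'a + 'a \<times> 'b)"
        "adj ?CE u (Inr (v,a))" "adj ?CE u (Inr (v,b))" "F (Inr (v,a)) = 2" "F (Inr (v,b)) = 2"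
        using ab L `fG v = 0` by (auto simp: Inr_in adj_Inl_Inr FR gg0)
      then show ?thesis by blast
    next
      case (R v x)
      have ux: "u = Inr (v,x)" by (rule R(3))
      from fv[OF R(1)] show ?thesis
      proof (elim disjE)
        assume "fG v = 0" then show ?thesis using u R g0(1) by (auto simp: FR gg0)
      next
        assume f1: "fG v = 1"
        then have "g1 x = 0" using u R by (simp add: FR gg1)
        from g1z[OF R(2) this] show ?thesis
        proof (elim disjE bexE conjE)
          fix y assume y: "y \<in> VH" "adj EH x y" "g1 y = 3"
          have "Inr (v,y) \<in> ?CV" "adj ?CE u (Inr (v,y))" "F (Inr (v,y)) = 3"
            using y R f1 by (auto simp: Inr_in adj_Inr_Inr FR gg1)
          then show ?thesis by blast
        next
          fix y z assume y: "y \<in> VH" "z \<in> VH" "y \<noteq> z" "adj EH x y" "adj EH x z" "g1 y = 2" "g1 z = 2"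
          have "Inr (v,y) \<in> ?CV" "Inr (v,z) \<in> ?CV" "Inr (v,y) \<noteq> (Inr (v,z) :: 'a + 'a \<times> 'b)"
            "adj ?CE u (Inr (v,y))" "adj ?CE u (Inr (v,z))" "F (Inr (v,y)) = 2" "F (Inr (v,z)) = 2"
            using y R f1 by (auto simp: Inr_in adj_Inr_Inr FR gg1)
          then show ?thesis by blast
        qed
      next
        assume f2: "fG v = 2"
        then have "g2 x = 0" using u R by (simp add: FR gg2)
        from g2z[OF R(2) this] obtain y where y: "y \<in> VH" "adj EH x y" "g2 y = 2" by blast
        have "Inl v \<in> ?CV" "Inr (v,y) \<in> ?CV" "Inl v \<noteq> (Inr (v,y) :: 'a + 'a \<times> 'b)"
          "adj ?CE u (Inl v)" "adj ?CE u (Inr (v,y))" "F (Inl v) = 2" "F (Inr (v,y)) = 2"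
          using y R f2 by (auto simp: Inl_in Inr_in adj_Inr_Inr adj_Inr_Inl FR FL gg2)
        then show ?thesis by blast
      next
        assume f3: "fG v = 3"
        have "Inl v \<in> ?CV" "adj ?CE u (Inl v)" "F (Inl v) = 3"
          using R f3 by (auto simp: Inl_in adj_Inr_Inl FL)
        then show ?thesis by blast
      qed
    qed
  qed
  have one: "\<forall>u\<in>?CV. F u = 1 \<longrightarrow> (\<exists>w\<in>?CV. adj ?CE u w \<and> F w \<ge> 2)"
  proof (intro ballI impI)
    fix u assume u: "u \<in> ?CV" "F u = 1"
    from u(1) show "\<exists>w\<in>?CV. adj ?CE u w \<and> F w \<ge> 2"
    proof (cases rule: corona_V_cases)
      case (L v)
      then have f1: "fG v = 1" using u by (simp add: FL)
      obtain y where y: "y \<in> VH" "g1 y \<ge> 2" using g1(3) by blast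
      have "Inr (v,y) \<in> ?CV" "adj ?CE u (Inr (v,y))" "F (Inr (v,y)) \<ge> 2"
        using y L f1 by (auto simp: Inr_in adj_Inl_Inr FR gg1)
      then show ?thesis by blast
    next
      case (R v x)
      from fv[OF R(1)] show ?thesis
      proof (elim disjE)
        assume f0: "fG v = 0"
        then have "g0 x = 1" using u R by (simp add: FR gg0)
        then obtain y where y: "y \<in> VH" "adj EH x y" "g0 y = 2" using g0(2) R(2) by blast
        have "Inr (v,y) \<in> ?CV" "adj ?CE u (Inr (v,y))" "F (Inr (v,y)) \<ge> 2"
          using y R f0 by (auto simp: Inr_in adj_Inr_Inr FR gg0)
        then show ?thesis by blast
      next
        assume f1: "fG v = 1"
        then have "g1 x = 1" using u R by (simp add: FR gg1)
        then obtain y where y: "y \<in> VH" "adj EH x y" "g1 y \<ge> 2" using g1o R(2) by blast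
        have "Inr (v,y) \<in> ?CV" "adj ?CE u (Inr (v,y))" "F (Inr (v,y)) \<ge> 2"
          using y R f1 by (auto simp: Inr_in adj_Inr_Inr FR gg1)
        then show ?thesis by blast
      next
        assume f2: "fG v = 2"
        have "Inl v \<in> ?CV" "adj ?CE u (Inl v)" "F (Inl v) \<ge> 2"
          using R f2 by (auto simp: Inl_in adj_Inr_Inl FL)
        then show ?thesis by blast
      next
        assume f3: "fG v = 3"
        have "Inl v \<in> ?CV" "adj ?CE u (Inl v)" "F (Inl v) \<ge> 2"
          using R f3 by (auto simp: Inl_in adj_Inr_Inl FL)
        then show ?thesis by blast
      qed
    qed
  qed
  have ggi: "\<And>v x y. v \<in> VG \<Longrightarrow> x \<in> VH \<Longrightarrow> y \<in> VH \<Longrightarrow> gg (fG v) x = 0 \<Longrightarrow> gg (fG v) y = 0 \<Longrightarrow> \<not> adj EH x y"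
  proof -
    fix v x y assume a: "v \<in> VG" "x \<in> VH" "y \<in> VH" "gg (fG v) x = 0" "gg (fG v) y = 0"
    from fv[OF a(1)] show "\<not> adj EH x y"
    proof (elim disjE)
      assume "fG v = 0" then show ?thesis using a g0(1) by (auto simp: gg0)
    next
      assume "fG v = 1" then show ?thesis using a g1i by (auto simp: gg1)
    next
      assume "fG v = 2" then show ?thesis using a g2i by (auto simp: gg2)
    next
      assume "fG v = 3" then show ?thesis using a g3i by (auto simp: gg3)
    qed
  qed
  have indep: "independent ?CE {u \<in> ?CV. F u = 0}"
    unfolding independent_def
  proof (intro ballI notI)
    fix u w assume u: "u \<in> {u \<in> ?CV. F u = 0}" and w: "w \<in> {u \<in> ?CV. F u = 0}" and a: "adj ?CE u w"
    from u have u1: "u \<in> ?CV" "F u = 0" by auto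
    from w have w1: "w \<in> ?CV" "F w = 0" by auto
    from u1(1) show False
    proof (cases rule: corona_V_cases)
      case (L v)
      from w1(1) show False
      proof (cases rule: corona_V_cases)
        case (L v')
        then have "adj EG v v'" using a `u = Inl v` by (simp add: adj_Inl_Inl)
        moreover have "fG v = 0" "fG v' = 0" using u1 w1 `u = Inl v` L by (auto simp: FL)
        ultimately show False using adm2 `v \<in> VG` L unfolding independent_def by blast
      next
        case (R v' x)
        then have "v = v'" using a `u = Inl v` by (simp add: adj_Inl_Inr)
        then show False using u1 w1 `u = Inl v` R g0(1) by (auto simp: FL FR gg0)
      qed
    next
      case (R v x)
      from w1(1) show False
      proof (cases rule: corona_V_cases)
        case (L v')
        then have "v = v'" using a `u = Inr (v,x)` by (simp add: adj_Inr_Inl)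
        then show False using u1 w1 `u = Inr (v,x)` L g0(1) `x \<in> VH` by (auto simp: FL FR gg0)
      next
        case (R v' y)
        then have "v = v'" "adj EH x y" using a `u = Inr (v,x)` by (simp_all add: adj_Inr_Inr)
        then show False using ggi[of v x y] u1 w1 `u = Inr (v,x)` R `x \<in> VH` `v \<in> VG` by (auto simp: FR)
      qed
    qed
  qed
  have "OIDRD ?CV ?CE F"
    unfolding OIDRD_def DRD_def using vals zero one indep by blast
  then show ?thesis using wt by blast
qed

theorem theorem6:
  fixes VG :: "'a set" and EG :: "'a set set" and VH :: "'b set" and EH :: "'b set set"
  assumes "sgraph VG EG"
    and "sgraph VH EH"
    and "VH \<noteq> {}"
    and "\<forall>x\<in>VH. degree VH EH x + 2 \<le> card VH"
  shows "gamma_oidR (corona_V VG VH) (corona_E VG EG VH EH) =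
    Min {card {v \<in> VG. f v = 0} * (card VH + domination_number VH EH)
         + card {v \<in> VG. f v = 1} * (gamma_oidR VH EH + 1)
         + card {v \<in> VG. f v = 2} * (gamma_oiR VH EH + 2)
         + card {v \<in> VG. f v = 3} * (vertex_cover_number VH EH + 3)
       | f. (f :: 'a \<Rightarrow> nat) ` VG \<subseteq> {0, 1, 2, 3} \<and> independent EG {v \<in> VG. f v = 0}}"
proof -
  let ?CV = "corona_V VG VH" and ?CE = "corona_E VG EG VH EH"
  define cost where "cost f = card {v \<in> VG. f v = 0} * (card VH + domination_number VH EH)
         + card {v \<in> VG. f v = 1} * (gamma_oidR VH EH + 1)
         + card {v \<in> VG. f v = 2} * (gamma_oiR VH EH + 2)
         + card {v \<in> VG. f v = 3} * (vertex_cover_number VH EH + 3)" for f :: "'a \<Rightarrow> nat"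
  define adm where "adm f \<longleftrightarrow> f ` VG \<subseteq> {0, 1, 2, 3} \<and> independent EG {v \<in> VG. f v = 0}" for f :: "'a \<Rightarrow> nat"
  have Req: "{card {v \<in> VG. f v = 0} * (card VH + domination_number VH EH)
         + card {v \<in> VG. f v = 1} * (gamma_oidR VH EH + 1)
         + card {v \<in> VG. f v = 2} * (gamma_oiR VH EH + 2)
         + card {v \<in> VG. f v = 3} * (vertex_cover_number VH EH + 3)
       | f. (f :: 'a \<Rightarrow> nat) ` VG \<subseteq> {0, 1, 2, 3} \<and> independent EG {v \<in> VG. f v = 0}} = cost ` {f. adm f}"
    unfolding cost_def adm_def by (rule setcompr_eq_image)
  have finG: "finite VG" using assms(1) by (simp add: sgraph_def)
  have finH: "finite VH" using assms(2) by (simp add: sgraph_def)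
  have finCV: "finite ?CV" using finG finH by (simp add: corona_V_def)
  have cost_eq: "\<And>f. adm f \<Longrightarrow> cost f = (\<Sum>v\<in>VG. lc VH EH (f v))"
  proof -
    fix f assume "adm f"
    then have "f ` VG \<subseteq> {0,1,2,3}" by (simp add: adm_def)
    from cost_sum[OF finG this, of VH EH] show "cost f = (\<Sum>v\<in>VG. lc VH EH (f v))"
      unfolding cost_def by simp
  qed
  define M where "M = card VH + domination_number VH EH + (gamma_oidR VH EH + 1) + (gamma_oiR VH EH + 2) + (vertex_cover_number VH EH + 3)"
  have lcM: "\<And>k. lc VH EH k \<le> M" by (simp add: lc_def M_def)
  have fin: "finite (cost ` {f. adm f})"
  proof (rule finite_subset[of _ "{..card VG * M}"])
    show "finite {..card VG * M}" by simp
    show "cost ` {f. adm f} \<subseteq> {..card VG * M}"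
    proof
      fix c assume "c \<in> cost ` {f. adm f}"
      then obtain f where f: "adm f" "c = cost f" by blast
      have "(\<Sum>v\<in>VG. lc VH EH (f v)) \<le> (\<Sum>v\<in>VG. M)" by (intro sum_mono lcM)
      then show "c \<in> {..card VG * M}" using f cost_eq[OF f(1)] by simp
    qed
  qed
  have adm3: "adm (\<lambda>_. 3)" by (auto simp: adm_def independent_def)
  have ne: "cost ` {f. adm f} \<noteq> {}" using adm3 by blast
  have le1: "gamma_oidR ?CV ?CE \<le> Min (cost ` {f. adm f})"
  proof -
    have "Min (cost ` {f. adm f}) \<in> cost ` {f. adm f}" using fin ne by (rule Min_in)
    then obtain f0 where f0: "adm f0" "Min (cost ` {f. adm f}) = cost f0" by auto
    obtain F where F: "OIDRD ?CV ?CE F" "weight ?CV F = (\<Sum>v\<in>VG. lc VH EH (f0 v))"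
      using construct[OF assms f0(1)[unfolded adm_def, THEN conjunct1] f0(1)[unfolded adm_def, THEN conjunct2]]
      by blast
    have "gamma_oidR ?CV ?CE \<le> weight ?CV F" by (rule oidR_le[OF finCV F(1)])
    then show ?thesis using F(2) f0(2) cost_eq[OF f0(1)] by simp
  qed
  have le2: "Min (cost ` {f. adm f}) \<le> gamma_oidR ?CV ?CE"
  proof -
    obtain F where F: "OIDRD ?CV ?CE F" "weight ?CV F = gamma_oidR ?CV ?CE"
      using oidR_ex[OF finCV] by blast
    define fG where "fG v = F (Inl v)" for v
    have "adm fG"
      unfolding adm_def
    proof
      have FV: "F ` ?CV \<subseteq> {0,1,2,3}" using F(1) unfolding OIDRD_def DRD_def by (elim conjE)
      show "fG ` VG \<subseteq> {0, 1, 2, 3}"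
      proof (rule image_subsetI)
        fix v assume "v \<in> VG"
        then have "Inl v \<in> ?CV" by (rule Inl_in)
        then show "fG v \<in> {0,1,2,3}" using FV unfolding fG_def by blast
      qed
      show "independent EG {v \<in> VG. fG v = 0}"
        unfolding independent_def
      proof (intro ballI notI)
        fix a b assume a: "a \<in> {v \<in> VG. fG v = 0}" and b: "b \<in> {v \<in> VG. fG v = 0}" and ab: "adj EG a b"
        have "adj ?CE (Inl a) (Inl b)" using ab by (simp add: adj_Inl_Inl)
        moreover have "Inl a \<in> {u \<in> ?CV. F u = 0}" "Inl b \<in> {u \<in> ?CV. F u = 0}"
          using a b by (auto simp: fG_def Inl_in)
        ultimately show False using F(1) unfolding OIDRD_def independent_def by blast
      qed
    qed
    then have "Min (cost ` {f. adm f}) \<le> cost fG" using fin by (intro Min_le) auto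
    also have "\<dots> = (\<Sum>v\<in>VG. lc VH EH (fG v))" by (rule cost_eq[OF `adm fG`])
    also have "\<dots> \<le> (\<Sum>v\<in>VG. F (Inl v) + (\<Sum>x\<in>VH. F (Inr (v,x))))"
      unfolding fG_def by (intro sum_mono local_lb[OF assms(2) F(1)])
    also have "\<dots> = weight ?CV F" by (rule weight_corona[OF finG finH, symmetric])
    finally show ?thesis using F(2) by simp
  qed
  show ?thesis unfolding Req using le1 le2 by simp
qed

end
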